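(* (Main) Let $\mathbb{K}$ be a field, $n>1$, $a=\sum_{j=0}^d c_j s^j\in\mathbb{K}[s]^n$ a non-zero row vector of degree $d$ ($c_j\in\mathbb{K}^n$), and $A\in\mathbb{K}^{(2d+1)\times n(d+1)}$ the matrix whose $(i,\,kn+r)$ entry ($1\le i\le 2d+1$, $0\le k\le d$, $1\le r\le n$) is the $r$-th entry of $c_{i-1-k}$ (zero if $i-1-k\notin\{0,\dots,d\}$). With $\tilde q$ and $b_r$ as in the context, the set $u=\{b_r^\flat\mid r\in\tilde q\}$ is a $\mu$-basis of $a$.
   Context: A column of a matrix is pivotal if it is either the first column and non-zero, or linearly independent of all previous columns; otherwise non-pivotal. $p$ is the set of pivotal indices of $A$, $q$ the set of non-pivotal indices, and $\tilde q=\{\min\varrho\mid\varrho\in q/(n)\}$ the basic non-pivotal indices (minimal elements of the classes of $q$ modulo $n$). For $i\in q$ write uniquely $A_{*i}=\sum_{\{j\in p\mid j<i\}}\alpha^{(i)}_jA_{*j}$ ($A_{*j}$ the $j$-th column) and set $b_i=e_i-\sum_{\{j\in p\mid j<i\}}\alpha^{(i)}_je_j$ ($e_i$ standard basis vectors of $\mathbb{K}^{n(d+1)}$). For $v=[w_0;\dots;w_d]\in\mathbb{K}^{n(d+1)}$ ($w_i\in\mathbb{K}^n$), $v^\flat=\sum_i s^iw_i\in\mathbb{K}[s]^n$. $\mathrm{syz}(a)=\{h\in\mathbb{K}[s]^n\mid a\,h=0\}$. For non-zero $h\in\mathbb{K}[s]^n$, $LV(h)\in\mathbb{K}^n$ is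 the vector of coefficients of $s^{\deg h}$ in its entries, $\deg h=\max_i\deg h_i$. A subset $u=\{u_1,\dots,u_{n-1}\}\subset\mathbb{K}[s]^n$ is a $\mu$-basis of $a$ if: (1) $u$ has exactly $n-1$ elements; (2) $LV(u_1),\dots,LV(u_{n-1})$ are linearly independent over $\mathbb{K}$; (3) $u$ is a basis of the $\mathbb{K}[s]$-module $\mathrm{syz}(a)$. *)

theory Defs
  imports "HOL-Computational_Algebra.Polynomial"
begin

(* Conventions: all indices are 0-based.
   A vector in K[s]^n is a function  nat => 'a poly  vanishing at indices >= n.
   A vector in K^N is a function  nat => 'a  (only indices < N are relevant).
   A matrix with m rows and N columns is a function  nat => nat => 'a
   (entry (i,j), only i < m, j < N relevant). *)

definition polyvec :: "nat \<Rightarrow> (nat \<Rightarrow> 'a::zero poly) \<Rightarrow> bool" where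
  "polyvec n h \<longleftrightarrow> (\<forall>r\<ge>n. h r = 0)"

definition pvdeg :: "nat \<Rightarrow> (nat \<Rightarrow> 'a::zero poly) \<Rightarrow> nat" where
  "pvdeg n h = Max ((\<lambda>r. degree (h r)) ` {..<n})"

definition LV :: "nat \<Rightarrow> (nat \<Rightarrow> 'a::zero poly) \<Rightarrow> nat \<Rightarrow> 'a" where
  "LV n h = (\<lambda>r. if r < n then coeff (h r) (pvdeg n h) else 0)"

definition syz :: "nat \<Rightarrow> (nat \<Rightarrow> 'a::comm_ring_1 poly) \<Rightarrow> (nat \<Rightarrow> 'a poly) set" where
  "syz n a = {h. polyvec n h \<and> (\<Sum>r<n. a r * h r) = 0}"

definition is_mu_basis :: "nat \<Rightarrow> (nat \<Rightarrow> 'a::field poly) \<Rightarrow> (nat \<Rightarrow> 'a poly) set \<Rightarrow> bool" where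
  "is_mu_basis n a u \<longleftrightarrow>
     \<comment> \<open>(1) exactly n-1 elements\<close>
     finite u \<and> card u = n - 1 \<and>
     \<comment> \<open>(2) the leading vectors LV(u_1),...,LV(u_{n-1}) are K-linearly independent\<close>
     (\<forall>c :: (nat \<Rightarrow> 'a poly) \<Rightarrow> 'a.
        (\<forall>r. (\<Sum>g\<in>u. c g * LV n g r) = 0) \<longrightarrow> (\<forall>g\<in>u. c g = 0)) \<and>
     \<comment> \<open>(3) u is a basis of the K[s]-module syz(a)\<close>
     u \<subseteq> syz n a \<and>
     (\<forall>h\<in>syz n a. \<exists>f :: (nat \<Rightarrow> 'a poly) \<Rightarrow> 'a poly. h = (\<lambda>r. \<Sum>g\<in>u. f g * g r)) \<and>
     (\<forall>f :: (nat \<Rightarrow> 'a poly) \<Rightarrow> 'a poly.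
        (\<lambda>r. \<Sum>g\<in>u. f g * g r) = (\<lambda>r. 0) \<longrightarrow> (\<forall>g\<in>u. f g = 0))"

text \<open>(2d+1) x n(d+1) matrix; entry (i, k*n + r) is the r-th entry of c_{i-k}
  (zero if i-k is not in {0..d}); 0-based version of the paper's indexing.\<close>
definition coeff_mat :: "nat \<Rightarrow> (nat \<Rightarrow> 'a::zero poly) \<Rightarrow> nat \<Rightarrow> nat \<Rightarrow> 'a" where
  "coeff_mat n a i j = (let k = j div n; r = j mod n in
      if k \<le> i then coeff (a r) (i - k) else 0)"

definition in_col_span :: "nat \<Rightarrow> (nat \<Rightarrow> nat \<Rightarrow> 'a::field) \<Rightarrow> nat set \<Rightarrow> nat \<Rightarrow> bool" where
  "in_col_span m A S j \<longleftrightarrow> (\<exists>c. \<forall>i<m. A i j = (\<Sum>l\<in>S. c l * A i l))"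

text \<open>pivotal: first column and non-zero, or linearly independent of (not in the span of)
  all previous columns; for j = 0 the span of no columns is {0}\<close>
definition pivotal :: "nat \<Rightarrow> (nat \<Rightarrow> nat \<Rightarrow> 'a::field) \<Rightarrow> nat \<Rightarrow> bool" where
  "pivotal m A j \<longleftrightarrow> \<not> in_col_span m A {..<j} j"

definition pivots :: "nat \<Rightarrow> nat \<Rightarrow> (nat \<Rightarrow> nat \<Rightarrow> 'a::field) \<Rightarrow> nat set" where
  "pivots m N A = {j. j < N \<and> pivotal m A j}"

definition nonpivots :: "nat \<Rightarrow> nat \<Rightarrow> (nat \<Rightarrow> nat \<Rightarrow> 'a::field) \<Rightarrow> nat set" where
  "nonpivots m N A = {j. j < N \<and> \<not> pivotal m A j}"

definition basic_nonpivots :: "nat \<Rightarrow> nat \<Rightarrow> nat \<Rightarrow> (nat \<Rightarrow> nat \<Rightarrow> 'a::field) \<Rightarrow> nat set" where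
  "basic_nonpivots n m N A =
     {j \<in> nonpivots m N A. \<forall>j'\<in>nonpivots m N A. j' mod n = j mod n \<longrightarrow> j \<le> j'}"

definition alpha :: "nat \<Rightarrow> nat \<Rightarrow> (nat \<Rightarrow> nat \<Rightarrow> 'a::field) \<Rightarrow> nat \<Rightarrow> nat \<Rightarrow> 'a" where
  "alpha m N A i = (THE c. (\<forall>j. c j \<noteq> 0 \<longrightarrow> j \<in> pivots m N A \<and> j < i) \<and>
      (\<forall>r<m. A r i = (\<Sum>j\<in>{j \<in> pivots m N A. j < i}. c j * A r j)))"

definition bvec :: "nat \<Rightarrow> nat \<Rightarrow> (nat \<Rightarrow> nat \<Rightarrow> 'a::field) \<Rightarrow> nat \<Rightarrow> nat \<Rightarrow> 'a" where
  "bvec m N A i = (\<lambda>k. (if k = i then 1 else 0) -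
      (if k \<in> pivots m N A \<and> k < i then alpha m N A i k else 0))"

text \<open>v = [w_0; ...; w_d] in K^{n(d+1)}  \<mapsto>  sum_k s^k w_k in K[s]^n\<close>
definition flat :: "nat \<Rightarrow> nat \<Rightarrow> (nat \<Rightarrow> 'a::comm_monoid_add) \<Rightarrow> nat \<Rightarrow> 'a poly" where
  "flat n d v = (\<lambda>r. if r < n then (\<Sum>k\<le>d. monom (v (k * n + r)) k) else 0)"

end

theory Submission
  imports Defs
begin

lemma span_pivots:
  fixes A :: "nat \<Rightarrow> nat \<Rightarrow> 'a::field"
  assumes "i \<le> N"
  shows "\<exists>c'. \<forall>t<m. (\<Sum>l<i. c l * A t l) = (\<Sum>l\<in>{l\<in>pivots m N A. l < i}. c' l * A t l)"
  using assms
proof (induction i arbitrary: c)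
  case 0 then show ?case by simp
next
  case (Suc i)
  show ?case
  proof (cases "pivotal m A i")
    case True
    obtain c' where c': "\<forall>t<m. (\<Sum>l<i. c l * A t l) = (\<Sum>l\<in>{l\<in>pivots m N A. l < i}. c' l * A t l)"
      using Suc by force
    have set: "{l\<in>pivots m N A. l < Suc i} = insert i {l\<in>pivots m N A. l < i}"
      using True Suc.prems by (auto simp: pivots_def)
    have fin: "finite {l\<in>pivots m N A. l < i}" by (rule finite_subset[of _ "{..<i}"]) auto
    let ?c = "c'(i := c i)"
    show ?thesis
    proof (intro exI allI impI)
      fix t assume "t < m"
      have "(\<Sum>l<Suc i. c l * A t l) = (\<Sum>l<i. c l * A t l) + c i * A t i" by simp
      also have "\<dots> = (\<Sum>l\<in>{l\<in>pivots m N A. l < i}. c' l * A t l) + c i * A t i" using c' \<open>t<m\<close> by simp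
      also have "(\<Sum>l\<in>{l\<in>pivots m N A. l < i}. c' l * A t l) = (\<Sum>l\<in>{l\<in>pivots m N A. l < i}. ?c l * A t l)"
        by (rule sum.cong) auto
      finally show "(\<Sum>l<Suc i. c l * A t l) = (\<Sum>l\<in>{l\<in>pivots m N A. l < Suc i}. ?c l * A t l)"
        using fin by (simp add: set)
    qed
  next
    case False
    then obtain e where e: "\<forall>t<m. A t i = (\<Sum>l<i. e l * A t l)"
      unfolding pivotal_def in_col_span_def by auto
    obtain c' where c': "\<forall>t<m. (\<Sum>l<i. (c l + c i * e l) * A t l) = (\<Sum>l\<in>{l\<in>pivots m N A. l < i}. c' l * A t l)"
      using Suc by force
    have set: "{l\<in>pivots m N A. l < Suc i} = {l\<in>pivots m N A. l < i}"
      using False by (auto simp: pivots_def less_Suc_eq)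
    show ?thesis
    proof (intro exI allI impI)
      fix t assume "t < m"
      have "(\<Sum>l<Suc i. c l * A t l) = (\<Sum>l<i. c l * A t l) + c i * A t i" by simp
      also have "\<dots> = (\<Sum>l<i. (c l + c i * e l) * A t l)"
        using e \<open>t<m\<close> by (simp add: sum_distrib_left distrib_right sum.distrib mult.assoc)
      finally show "(\<Sum>l<Suc i. c l * A t l) = (\<Sum>l\<in>{l\<in>pivots m N A. l < Suc i}. c' l * A t l)"
        using c' \<open>t<m\<close> by (simp add: set)
    qed
  qed
qed

lemma pivots_indep:
  fixes A :: "nat \<Rightarrow> nat \<Rightarrow> 'a::field"
  assumes fin: "finite F" and piv: "\<And>l. l \<in> F \<Longrightarrow> pivotal m A l"
    and eq: "\<forall>t<m. (\<Sum>l\<in>F. e l * A t l) = 0"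
  shows "\<forall>l\<in>F. e l = 0"
proof (rule ccontr)
  assume "\<not> (\<forall>l\<in>F. e l = 0)"
  then have ne: "{l\<in>F. e l \<noteq> 0} \<noteq> {}" by auto
  define M where "M = Max {l\<in>F. e l \<noteq> 0}"
  have finZ: "finite {l\<in>F. e l \<noteq> 0}" using fin by auto
  have MZ: "M \<in> F" "e M \<noteq> 0" using Max_in[OF finZ ne] unfolding M_def by auto
  have Mmax: "\<And>l. l \<in> F \<Longrightarrow> e l \<noteq> 0 \<Longrightarrow> l \<le> M" using Max_ge[OF finZ] unfolding M_def by auto
  have "in_col_span m A {..<M} M"
    unfolding in_col_span_def
  proof (intro exI allI impI)
    fix t assume "t < m"
    have "0 = (\<Sum>l\<in>F. e l * A t l)" using eq \<open>t<m\<close> by simp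
    also have "\<dots> = e M * A t M + (\<Sum>l\<in>F-{M}. e l * A t l)"
      using fin MZ by (simp add: sum.remove)
    also have "(\<Sum>l\<in>F-{M}. e l * A t l) = (\<Sum>l\<in>{..<M}. (if l \<in> F then e l else 0) * A t l)"
    proof -
      have "(\<Sum>l\<in>F-{M}. e l * A t l) = (\<Sum>l\<in>F \<inter> {..<M}. e l * A t l)"
      proof (rule sum.mono_neutral_cong_right)
        show "\<forall>i\<in>F - {M} - F \<inter> {..<M}. e i * A t i = 0"
        proof
          fix i assume i: "i \<in> F - {M} - F \<inter> {..<M}"
          then have "e i = 0" using Mmax[of i] by force
          then show "e i * A t i = 0" by simp
        qed
      qed (use fin in auto)
      also have "\<dots> = (\<Sum>l\<in>{..<M}. (if l \<in> F then e l else 0) * A t l)"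
        by (rule sum.mono_neutral_cong_left) auto
      finally show ?thesis .
    qed
    finally have eqM: "e M * A t M = - (\<Sum>l<M. (if l \<in> F then e l else 0) * A t l)"
      by (simp add: eq_neg_iff_add_eq_0 add.commute)
    have "A t M = (e M * A t M) / e M" using MZ by simp
    also have "\<dots> = (- (\<Sum>l<M. (if l \<in> F then e l else 0) * A t l)) / e M"
      by (simp only: eqM)
    also have "\<dots> = (\<Sum>l<M. (- (if l \<in> F then e l else 0) / e M) * A t l)"
      by (simp add: sum_divide_distrib sum_negf[symmetric])
    finally have "A t M = (\<Sum>l<M. (- (if l \<in> F then e l else 0) / e M) * A t l)" .
    then show "A t M = (\<Sum>l\<in>{..<M}. (\<lambda>l. - (if l \<in> F then e l else 0) / e M) l * A t l)" by simp
  qed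
  then show False using piv[OF MZ(1)] unfolding pivotal_def by simp
qed

lemma alpha_props:
  fixes A :: "nat \<Rightarrow> nat \<Rightarrow> 'a::field"
  assumes "i < N" "\<not> pivotal m A i"
  shows "(\<forall>j. alpha m N A i j \<noteq> 0 \<longrightarrow> j \<in> pivots m N A \<and> j < i) \<and>
      (\<forall>r<m. A r i = (\<Sum>j\<in>{j \<in> pivots m N A. j < i}. alpha m N A i j * A r j))"
proof -
  let ?F = "{j \<in> pivots m N A. j < i}"
  let ?P = "\<lambda>c. (\<forall>j. c j \<noteq> 0 \<longrightarrow> j \<in> pivots m N A \<and> j < i) \<and>
      (\<forall>r<m. A r i = (\<Sum>j\<in>?F. c j * A r j))"
  have finF: "finite ?F" by (rule finite_subset[of _ "{..<i}"]) auto
  obtain c where c: "\<forall>r<m. A r i = (\<Sum>l<i. c l * A r l)"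
    using assms(2) unfolding pivotal_def in_col_span_def by auto
  obtain c' where c': "\<forall>t<m. (\<Sum>l<i. c l * A t l) = (\<Sum>l\<in>?F. c' l * A t l)"
    using span_pivots[where i=i and N=N and c=c and m=m and A=A] assms(1) by auto
  define c'' where "c'' = (\<lambda>j. if j \<in> pivots m N A \<and> j < i then c' j else 0)"
  have "?P c''"
  proof
    show "\<forall>j. c'' j \<noteq> 0 \<longrightarrow> j \<in> pivots m N A \<and> j < i" by (auto simp: c''_def)
    show "\<forall>r<m. A r i = (\<Sum>j\<in>?F. c'' j * A r j)"
    proof (intro allI impI)
      fix r assume "r < m"
      have "A r i = (\<Sum>l\<in>?F. c' l * A r l)" using c c' \<open>r<m\<close> by simp
      also have "\<dots> = (\<Sum>j\<in>?F. c'' j * A r j)" by (rule sum.cong) (auto simp: c''_def)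
      finally show "A r i = (\<Sum>j\<in>?F. c'' j * A r j)" .
    qed
  qed
  moreover have "c1 = c2" if "?P c1" "?P c2" for c1 c2
  proof -
    have "\<forall>l\<in>?F. (c1 l - c2 l) = 0"
    proof (rule pivots_indep[OF finF])
      show "\<And>l. l \<in> ?F \<Longrightarrow> pivotal m A l" by (auto simp: pivots_def)
      show "\<forall>t<m. (\<Sum>l\<in>?F. (c1 l - c2 l) * A t l) = 0"
      proof (intro allI impI)
        fix t assume "t < m"
        have "(\<Sum>l\<in>?F. (c1 l - c2 l) * A t l) = (\<Sum>l\<in>?F. c1 l * A t l) - (\<Sum>l\<in>?F. c2 l * A t l)"
          by (simp add: left_diff_distrib sum_subtractf)
        also have "\<dots> = 0" using that \<open>t<m\<close> by auto
        finally show "(\<Sum>l\<in>?F. (c1 l - c2 l) * A t l) = 0" .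
      qed
    qed
    then show "c1 = c2" using that by (metis (no_types, lifting) eq_iff_diff_eq_0 mem_Collect_eq ext)
  qed
  ultimately have "\<exists>!c. ?P c" by blast
  then have "?P (THE c. ?P c)" by (rule theI')
  then show ?thesis unfolding alpha_def .
qed

lemma bvec_syz:
  fixes A :: "nat \<Rightarrow> nat \<Rightarrow> 'a::field"
  assumes "i < N" "\<not> pivotal m A i" "t < m"
  shows "(\<Sum>j<N. A t j * bvec m N A i j) = 0"
proof -
  let ?F = "{j \<in> pivots m N A. j < i}"
  note al = alpha_props[OF assms(1,2)]
  have FN: "?F \<subseteq> {..<N}" by (auto simp: pivots_def)
  have "(\<Sum>j<N. A t j * bvec m N A i j) = (\<Sum>j<N. (if j = i then A t j else 0))
       - (\<Sum>j<N. (if j \<in> ?F then alpha m N A i j * A t j else 0))"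
  proof -
    have "(\<Sum>j<N. A t j * bvec m N A i j) = (\<Sum>j<N. (if j = i then A t j else 0)
       - (if j \<in> ?F then alpha m N A i j * A t j else 0))"
      by (rule sum.cong) (auto simp: bvec_def right_diff_distrib mult.commute)
    then show ?thesis by (simp add: sum_subtractf)
  qed
  also have "(\<Sum>j<N. (if j = i then A t j else 0)) = A t i" using assms(1) by simp
  also have "(\<Sum>j<N. (if j \<in> ?F then alpha m N A i j * A t j else 0)) = (\<Sum>j\<in>?F. alpha m N A i j * A t j)"
    using FN by (simp add: sum.If_cases Int_absorb1 Int_commute)
  also have "A t i - \<dots> = 0" using al assms(3) by simp
  finally show ?thesis .
qed

definition cf :: "nat \<Rightarrow> (nat \<Rightarrow> 'a::zero poly) \<Rightarrow> nat \<Rightarrow> 'a" where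
  "cf n h j = coeff (h (j mod n)) (j div n)"

definition lead :: "nat \<Rightarrow> (nat \<Rightarrow> 'a::zero poly) \<Rightarrow> nat \<Rightarrow> bool" where
  "lead n h I \<longleftrightarrow> cf n h I \<noteq> 0 \<and> (\<forall>j>I. cf n h j = 0)"

lemma cf_kn: "r < n \<Longrightarrow> cf n h (k*n+r) = coeff (h r) k"
  unfolding cf_def by simp

lemma lead_unique: "lead n h I \<Longrightarrow> lead n h J \<Longrightarrow> I = J"
  unfolding lead_def by (metis linorder_neqE_nat)

lemma lead_exists:
  assumes "n > 0" "polyvec n h" "\<exists>r<n. h r \<noteq> 0"
  shows "\<exists>I. lead n h I"
proof -
  let ?S = "{j. cf n h j \<noteq> 0}"
  define D where "D = pvdeg n h"
  have "?S \<subseteq> {..<n*(D+1)}"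
  proof
    fix j assume "j \<in> ?S"
    then have c: "coeff (h (j mod n)) (j div n) \<noteq> 0" by (simp add: cf_def)
    have "j div n \<le> degree (h (j mod n))" using c by (rule le_degree)
    also have "\<dots> \<le> D" unfolding D_def pvdeg_def using assms(1) by (intro Max_ge) auto
    finally have "j div n < D + 1" by simp
    then have "j < n * (D+1)" using assms(1)
      by (metis div_less_iff_less_mult mult.commute)
    then show "j \<in> {..<n*(D+1)}" by simp
  qed
  then have fin: "finite ?S" by (rule finite_subset) auto
  obtain r where r: "r < n" "h r \<noteq> 0" using assms(3) by auto
  have "cf n h (degree (h r) * n + r) \<noteq> 0" using r by (simp add: cf_kn)
  then have ne: "?S \<noteq> {}" by blast
  have "lead n h (Max ?S)"
    unfolding lead_def
  proof
    show "cf n h (Max ?S) \<noteq> 0" using Max_in[OF fin ne] by simp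
    show "\<forall>j>Max ?S. cf n h j = 0" using Max_ge[OF fin] by (meson leD mem_Collect_eq)
  qed
  then show ?thesis ..
qed

lemma lead_degree:
  assumes "n > 0" "lead n h I" "r < n"
  shows "degree (h r) \<le> I div n"
proof (rule degree_le, intro allI impI)
  fix k assume "I div n < k"
  then have "I < k*n + r" using assms(1)
    by (metis div_less_iff_less_mult less_le_trans mult.commute le_add1)
  then have "cf n h (k*n+r) = 0" using assms(2) unfolding lead_def by auto
  then show "coeff (h r) k = 0" using assms(3) by (simp add: cf_kn)
qed

lemma lead_pvdeg:
  assumes "n > 0" "lead n h I"
  shows "pvdeg n h = I div n"
proof -
  have "degree (h (I mod n)) \<ge> I div n"
    using assms(2) unfolding lead_def cf_def by (simp add: le_degree)
  moreover have "I mod n < n" using assms(1) by simp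
  have "Max ((\<lambda>r. degree (h r)) ` {..<n}) \<le> I div n"
    using lead_degree[OF assms] assms(1) by (intro Max.boundedI) auto
  moreover have "degree (h (I mod n)) \<le> Max ((\<lambda>r. degree (h r)) ` {..<n})"
    using \<open>I mod n < n\<close> by (intro Max_ge) auto
  ultimately show ?thesis unfolding pvdeg_def using \<open>degree (h (I mod n)) \<ge> I div n\<close> by linarith
qed

lemma lead_LV:
  assumes "n > 0" "lead n h I" "r < n"
  shows "LV n h r = cf n h ((I div n)*n + r)"
  using assms by (simp add: LV_def lead_pvdeg cf_kn)

lemma coeff_mult_top:
  fixes p q :: "'a::comm_semiring_1 poly"
  assumes "degree p \<le> d" "degree q \<le> k"
  shows "coeff (p*q) (d+k) = coeff p d * coeff q k"
proof -
  have "coeff (p*q) (d+k) = (\<Sum>i\<le>d+k. coeff p i * coeff q (d+k-i))" by (rule coeff_mult)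
  also have "\<dots> = coeff p d * coeff q (d+k-d)"
  proof (rule sum.mono_neutral_cong_right[where S="{d}", THEN trans])
    show "\<forall>i\<in>{..d + k} - {d}. coeff p i * coeff q (d + k - i) = 0"
    proof
      fix i assume i: "i \<in> {..d + k} - {d}"
      show "coeff p i * coeff q (d + k - i) = 0"
      proof (cases "i < d")
        case True then have "d+k-i > k" by simp
        then have "coeff q (d+k-i) = 0" using assms(2) by (intro coeff_eq_0) simp
        then show ?thesis by simp
      next
        case False then have "i > d" using i by auto
        then have "coeff p i = 0" using assms(1) by (intro coeff_eq_0) simp
        then show ?thesis by simp
      qed
    qed
  qed auto
  finally show ?thesis by simp
qed

lemma cf_mult_lead:
  fixes p :: "'a::idom poly"
  assumes "n > 0" "p \<noteq> 0" "lead n h I"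
  shows "lead n (\<lambda>r. p * h r) (degree p * n + I)"
    and "cf n (\<lambda>r. p * h r) (degree p * n + I) = lead_coeff p * cf n h I"
proof -
  have deg: "\<And>r. r < n \<Longrightarrow> degree (h r) \<le> I div n" using lead_degree[OF assms(1,3)] .
  have key: "coeff (p * h r) (degree p + k) = lead_coeff p * coeff (h r) k"
    if "r < n" "k \<ge> I div n" for r k
    using coeff_mult_top[of p "degree p" "h r" k] deg[OF that(1)] that(2) by simp
  have eqI: "degree p * n + I = (degree p + I div n) * n + I mod n"
    by (simp add: distrib_right)
  have cfI: "cf n (\<lambda>r. p * h r) (degree p * n + I) = lead_coeff p * cf n h I"
    using assms(1) by (simp add: eqI cf_kn key cf_def)
  show "cf n (\<lambda>r. p * h r) (degree p * n + I) = lead_coeff p * cf n h I" by (rule cfI)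
  show "lead n (\<lambda>r. p * h r) (degree p * n + I)"
    unfolding lead_def
  proof
    show "cf n (\<lambda>r. p * h r) (degree p * n + I) \<noteq> 0"
      using cfI assms(2,3) by (simp add: lead_def)
    show "\<forall>j>degree p * n + I. cf n (\<lambda>r. p * h r) j = 0"
    proof (intro allI impI)
      fix j assume j: "degree p * n + I < j"
      define k r where "k = j div n" and "r = j mod n"
      have jkr: "j = k*n + r" "r < n" using assms(1) by (simp_all add: k_def r_def)
      show "cf n (\<lambda>r. p * h r) j = 0"
      proof (cases "k > degree p + I div n")
        case True
        have "degree (p * h r) \<le> degree p + I div n"
          using degree_mult_le[of p "h r"] deg[OF jkr(2)] by linarith
        then have "coeff (p * h r) k = 0" using True by (intro coeff_eq_0) simp
        then show ?thesis using jkr by (simp add: cf_kn)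
      next
        case False
        have "k \<ge> degree p + I div n"
        proof (rule ccontr)
          assume "\<not> ?thesis"
          then have "k + 1 \<le> degree p + I div n" by simp
          then have "(k+1)*n \<le> (degree p + I div n) * n" by (rule mult_le_mono1)
          moreover have "(degree p + I div n) * n \<le> degree p * n + I"
            by (simp add: distrib_right)
          ultimately show False using j jkr div_times_less_eq_dividend[of I n] by (simp add: distrib_right)
        qed
        then have k: "k = degree p + I div n" using False by simp
        then have "coeff (p * h r) k = lead_coeff p * coeff (h r) (I div n)"
          using key[OF jkr(2)] by simp
        moreover have "I < (I div n) * n + r"
        proof -
          have "degree p * n + I < (degree p + I div n) * n + r" using j jkr k by simp
          then show ?thesis by (simp add: distrib_right)
        qed
        then have "coeff (h r) (I div n) = 0" using assms(3) jkr(2) unfolding lead_def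
          by (metis cf_kn)
        ultimately show ?thesis using jkr by (simp add: cf_kn)
      qed
    qed
  qed
qed

lemma sum_single:
  assumes "finite S" "x0 \<in> S" "\<And>x. x \<in> S \<Longrightarrow> x \<noteq> x0 \<Longrightarrow> f x = 0"
  shows "sum f S = f x0"
proof -
  have "sum f S = f x0 + sum f (S - {x0})" using assms(1,2) by (simp add: sum.remove)
  also have "sum f (S - {x0}) = 0" using assms(3) by (intro sum.neutral) auto
  finally show ?thesis by simp
qed

lemma sum_blocks:
  fixes f :: "nat \<Rightarrow> 'b::comm_monoid_add"
  shows "(\<Sum>j<D*n. f j) = (\<Sum>k<D. \<Sum>r<n. f (k*n+r))"
proof -
  have "(\<Sum>j<D*n. f j) = (\<Sum>k<D. sum f {k*n..<k*n+n})" by (rule sum.nat_group[symmetric])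
  also have "\<dots> = (\<Sum>k<D. \<Sum>r<n. f (k*n+r))"
  proof (rule sum.cong[OF refl])
    fix k
    show "sum f {k*n..<k*n+n} = (\<Sum>r<n. f (k*n+r))"
      by (rule sum.reindex_bij_witness[where i="\<lambda>r. k*n+r" and j="\<lambda>j. j - k*n"]) auto
  qed
  finally show ?thesis .
qed

locale mb =
  fixes a :: "nat \<Rightarrow> 'a::field poly" and n d :: nat
  assumes n1: "n > 1" and pa: "polyvec n a" and nz: "\<exists>r<n. a r \<noteq> 0" and dd: "d = pvdeg n a"
begin

abbreviation "NN \<equiv> n*(d+1)"
abbreviation "MM \<equiv> 2*d+1"
abbreviation "AA \<equiv> coeff_mat n a"
abbreviation "g \<equiv> (\<lambda>i. flat n d (bvec MM NN AA i))"

lemma n0: "n > 0" using n1 by simp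

lemma a_deg: "degree (a r) \<le> d"
proof (cases "r < n")
  case True then show ?thesis unfolding dd pvdeg_def by (intro Max_ge) auto
next
  case False then show ?thesis using pa by (simp add: polyvec_def)
qed

lemma a_top: "\<exists>r<n. coeff (a r) d \<noteq> 0"
proof -
  have "d \<in> (\<lambda>r. degree (a r)) ` {..<n}" unfolding dd pvdeg_def using n0 by (intro Max_in) auto
  then obtain r where r: "r < n" "degree (a r) = d" by auto
  show ?thesis
  proof (cases "a r = 0")
    case False then show ?thesis using r by (intro exI[of _ r]) auto
  next
    case True
    then have "d = 0" using r by simp
    obtain r' where r': "r' < n" "a r' \<noteq> 0" using nz by auto
    have "degree (a r') = 0" using a_deg[of r'] \<open>d=0\<close> by simp
    then have "coeff (a r') 0 \<noteq> 0" using r'(2) leading_coeff_0_iff by fastforce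
    then show ?thesis using r' \<open>d=0\<close> by auto
  qed
qed

lemma B2:
  assumes deg: "\<And>r. r < n \<Longrightarrow> degree (h r) \<le> d"
  shows "coeff (\<Sum>r<n. a r * h r) t = (\<Sum>j<NN. AA t j * cf n h j)"
proof -
  have "(\<Sum>j<NN. AA t j * cf n h j) = (\<Sum>k<d+1. \<Sum>r<n. AA t (k*n+r) * cf n h (k*n+r))"
    using sum_blocks[of "\<lambda>j. AA t j * cf n h j" "d+1" n] by (simp add: mult.commute)
  also have "\<dots> = (\<Sum>k<d+1. \<Sum>r<n. (if k \<le> t then coeff (a r) (t-k) * coeff (h r) k else 0))"
    by (intro sum.cong refl) (auto simp: coeff_mat_def cf_kn Let_def)
  also have "\<dots> = (\<Sum>r<n. \<Sum>k<d+1. (if k \<le> t then coeff (a r) (t-k) * coeff (h r) k else 0))"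
    by (rule sum.swap)
  also have "\<dots> = (\<Sum>r<n. coeff (a r * h r) t)"
  proof (rule sum.cong[OF refl])
    fix r assume r: "r \<in> {..<n}"
    have "coeff (a r * h r) t = coeff (h r * a r) t" by (simp add: mult.commute)
    also have "\<dots> = (\<Sum>i\<le>t. coeff (h r) i * coeff (a r) (t-i))" by (rule coeff_mult)
    also have "\<dots> = (\<Sum>i\<in>{..t} \<inter> {..<d+1}. coeff (h r) i * coeff (a r) (t-i))"
    proof (rule sum.mono_neutral_right)
      show "\<forall>i\<in>{..t} - {..t} \<inter> {..<d + 1}. coeff (h r) i * coeff (a r) (t - i) = 0"
        using deg[of r] r by (auto intro!: coeff_eq_0)
    qed auto
    also have "\<dots> = (\<Sum>k\<in>{k\<in>{..<d+1}. k \<le> t}. coeff (a r) (t-k) * coeff (h r) k)"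
      by (intro sum.cong) (auto simp: mult.commute)
    also have "\<dots> = (\<Sum>k<d+1. (if k \<le> t then coeff (a r) (t-k) * coeff (h r) k else 0))"
      by (rule sum.inter_filter) simp
    finally show "(\<Sum>k<d+1. (if k \<le> t then coeff (a r) (t-k) * coeff (h r) k else 0)) = coeff (a r * h r) t"
      by simp
  qed
  also have "\<dots> = coeff (\<Sum>r<n. a r * h r) t" by (simp add: coeff_sum)
  finally show ?thesis by simp
qed

lemma syz_iff:
  assumes pv: "polyvec n h" and deg: "\<And>r. r < n \<Longrightarrow> degree (h r) \<le> d"
  shows "h \<in> syz n a \<longleftrightarrow> (\<forall>t<MM. (\<Sum>j<NN. AA t j * cf n h j) = 0)"
proof
  have B2h: "coeff (\<Sum>r<n. a r * h r) t = (\<Sum>j<NN. AA t j * cf n h j)" for t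
    by (rule B2) (rule deg)
  assume "h \<in> syz n a"
  then have z: "(\<Sum>r<n. a r * h r) = 0" by (simp add: syz_def)
  show "\<forall>t<MM. (\<Sum>j<NN. AA t j * cf n h j) = 0"
  proof (intro allI impI)
    fix t
    show "(\<Sum>j<NN. AA t j * cf n h j) = 0" using B2h[of t] z by simp
  qed
next
  assume H: "\<forall>t<MM. (\<Sum>j<NN. AA t j * cf n h j) = 0"
  have B2h: "coeff (\<Sum>r<n. a r * h r) t = (\<Sum>j<NN. AA t j * cf n h j)" for t
    by (rule B2) (rule deg)
  have "(\<Sum>r<n. a r * h r) = 0"
  proof (rule poly_eqI)
    fix t
    show "coeff (\<Sum>r<n. a r * h r) t = coeff 0 t"
    proof (cases "t < MM")
      case True then show ?thesis using H B2h by simp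
    next
      case False
      have dm: "degree (a r * h r) \<le> d + d" if "r \<in> {..<n}" for r
        using degree_mult_le[of "a r" "h r"] a_deg[of r] deg[of r] that by simp
      have "degree (\<Sum>r<n. a r * h r) \<le> d + d"
        using dm by (intro degree_sum_le) auto
      then show ?thesis using False by (auto intro!: coeff_eq_0)
    qed
  qed
  then show "h \<in> syz n a" using pv unfolding syz_def by simp
qed

lemma flat_coeff: "r < n \<Longrightarrow> coeff (flat n d v r) k = (if k \<le> d then v (k*n+r) else 0)"
  by (simp add: flat_def coeff_sum coeff_monom)

lemma cf_flat: "cf n (flat n d v) j = (if j < NN then v j else 0)"
proof -
  have "j mod n < n" using n0 by simp
  moreover have "(j div n \<le> d) = (j < NN)"
    using n0 by (metis Suc_eq_plus1 div_less_iff_less_mult less_Suc_eq_le mult.commute)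
  ultimately show ?thesis unfolding cf_def by (simp add: flat_coeff)
qed

lemma flat_pv: "polyvec n (flat n d v)"
  by (simp add: polyvec_def flat_def)

lemma flat_deg: "degree (flat n d v r) \<le> d"
  unfolding flat_def
  by (auto intro!: degree_sum_le order.trans[OF degree_monom_le])

lemma g_syz:
  assumes "i < NN" "\<not> pivotal MM AA i"
  shows "g i \<in> syz n a"
  using bvec_syz[OF assms] by (subst syz_iff) (auto simp: flat_pv flat_deg cf_flat)

lemma g_lead:
  assumes "i < NN"
  shows "lead n (g i) i" "cf n (g i) i = 1"
proof -
  show "cf n (g i) i = 1" using assms by (simp add: cf_flat bvec_def)
  then show "lead n (g i) i" unfolding lead_def by (auto simp: cf_flat bvec_def)
qed

lemma NP_iff:
  assumes "j < NN"
  shows "\<not> pivotal MM AA j \<longleftrightarrow> (\<exists>h\<in>syz n a. lead n h j)"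
proof
  assume "\<not> pivotal MM AA j"
  then show "\<exists>h\<in>syz n a. lead n h j" using g_syz g_lead assms by blast
next
  assume "\<exists>h\<in>syz n a. lead n h j"
  then obtain h where h: "h \<in> syz n a" "lead n h j" by auto
  have jd: "j div n \<le> d"
    using assms n0 by (metis Suc_eq_plus1 div_less_iff_less_mult less_Suc_eq_le mult.commute)
  have deg: "\<And>r. r < n \<Longrightarrow> degree (h r) \<le> d"
    using lead_degree[OF n0 h(2)] jd by (meson order.trans)
  have pv: "polyvec n h" using h(1) by (simp add: syz_def)
  have E: "\<forall>t<MM. (\<Sum>l<NN. AA t l * cf n h l) = 0" using h(1) syz_iff[OF pv deg] by simp
  let ?c = "cf n h"
  have cj: "?c j \<noteq> 0" and cz: "\<And>l. l > j \<Longrightarrow> ?c l = 0" using h(2) by (auto simp: lead_def)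
  have "in_col_span MM AA {..<j} j"
    unfolding in_col_span_def
  proof (intro exI allI impI)
    fix t assume "t < MM"
    have "0 = (\<Sum>l<NN. AA t l * ?c l)" using E \<open>t<MM\<close> by simp
    also have "\<dots> = (\<Sum>l<Suc j. AA t l * ?c l)"
      using assms cz by (intro sum.mono_neutral_right) auto
    also have "\<dots> = (\<Sum>l<j. AA t l * ?c l) + AA t j * ?c j" by simp
    finally have eq: "AA t j * ?c j = - (\<Sum>l<j. AA t l * ?c l)" by (metis add.commute eq_neg_iff_add_eq_0)
    have "AA t j = (AA t j * ?c j) / ?c j" using cj by simp
    also have "\<dots> = (- (\<Sum>l<j. AA t l * ?c l)) / ?c j" by (simp only: eq)
    also have "\<dots> = (\<Sum>l<j. - (AA t l * ?c l) / ?c j)"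
      by (simp only: sum_divide_distrib[symmetric] sum_negf)
    also have "\<dots> = (\<Sum>l<j. (- ?c l / ?c j) * AA t l)"
      by (intro sum.cong refl) (simp add: mult.commute)
    finally show "AA t j = (\<Sum>l\<in>{..<j}. (\<lambda>l. - ?c l / ?c j) l * AA t l)" by simp
  qed
  then show "\<not> pivotal MM AA j" by (simp add: pivotal_def)
qed

end

context mb begin

definition Pp :: "nat \<Rightarrow> bool" where
  "Pp r \<longleftrightarrow> (\<exists>h\<in>syz n a. \<exists>I. lead n h I \<and> I mod n = r)"

definition Qq :: "nat \<Rightarrow> bool" where
  "Qq r \<longleftrightarrow> (\<exists>h\<in>syz n a. \<exists>I<NN. lead n h I \<and> I mod n = r)"

lemma Qq_Pp: "Qq r \<Longrightarrow> Pp r"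
  unfolding Qq_def Pp_def by blast

lemma top_orth:
  assumes "h \<in> syz n a" "lead n h I"
  shows "(\<Sum>r<n. coeff (a r) d * cf n h ((I div n)*n + r)) = 0"
proof -
  have z: "(\<Sum>r<n. a r * h r) = 0" using assms(1) by (simp add: syz_def)
  have "0 = coeff (\<Sum>r<n. a r * h r) (d + I div n)" by (simp add: z)
  also have "\<dots> = (\<Sum>r<n. coeff (a r * h r) (d + I div n))" by (simp add: coeff_sum)
  also have "\<dots> = (\<Sum>r<n. coeff (a r) d * cf n h ((I div n)*n + r))"
    by (intro sum.cong refl) (simp add: coeff_mult_top a_deg lead_degree[OF n0 assms(2)] cf_kn)
  finally show ?thesis by simp
qed

lemma not_all_P: "\<exists>r0<n. \<not> Pp r0"
proof (rule ccontr)
  assume "\<not> ?thesis"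
  then have allP: "\<forall>r<n. Pp r" by auto
  have "\<forall>r<n. coeff (a r) d = 0"
  proof (intro allI impI)
    fix r assume "r < n"
    then show "coeff (a r) d = 0"
    proof (induction r rule: less_induct)
      case (less r)
      obtain h I where h: "h \<in> syz n a" "lead n h I" "I mod n = r"
        using allP less.prems unfolding Pp_def by auto
      let ?K = "I div n"
      have IK: "?K * n + r = I" using h(3) by (metis div_mult_mod_eq)
      have "0 = (\<Sum>r'<n. coeff (a r') d * cf n h (?K*n + r'))" using top_orth[OF h(1,2)] by simp
      also have "\<dots> = coeff (a r) d * cf n h (?K*n + r)"
      proof (rule sum_single)
        show "finite {..<n}" by simp
        show "r \<in> {..<n}" using less.prems by simp
        fix r' assume r': "r' \<in> {..<n}" "r' \<noteq> r"
        show "coeff (a r') d * cf n h (?K*n + r') = 0"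
        proof (cases "r' < r")
          case True then show ?thesis using less.IH less.prems by simp
        next
          case False then have "r' > r" using r' by simp
          then have "?K*n + r' > I" using IK by simp
          then show ?thesis using h(2) by (simp add: lead_def)
        qed
      qed
      finally have "coeff (a r) d * cf n h I = 0" using IK by simp
      then show ?case using h(2) by (simp add: lead_def)
    qed
  qed
  then show False using a_top by auto
qed

lemma Q_unit:
  assumes "r < n" "a r = 0"
  shows "Qq r"
proof -
  define h where "h = (\<lambda>r'. if r' = r then (1::'a poly) else 0)"
  have pv: "polyvec n h" using assms(1) by (auto simp: polyvec_def h_def)
  have "(\<Sum>r'<n. a r' * h r') = (\<Sum>r'<n. if r' = r then a r else 0)"
    by (intro sum.cong refl) (auto simp: h_def)
  also have "\<dots> = 0" using assms by simp
  finally have "h \<in> syz n a" using pv by (simp add: syz_def)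
  moreover have "lead n h r"
    unfolding lead_def
  proof
    show "cf n h r \<noteq> 0" using assms(1) by (simp add: cf_def h_def)
    show "\<forall>j>r. cf n h j = 0"
    proof (intro allI impI)
      fix j assume "j > r"
      show "cf n h j = 0"
      proof (cases "j mod n = r")
        case True
        then have "j div n \<noteq> 0" using \<open>j > r\<close> by (metis div_mult_mod_eq add_0 mult_0 less_irrefl)
        then show ?thesis using True by (simp add: cf_def h_def)
      next
        case False then show ?thesis by (simp add: cf_def h_def)
      qed
    qed
  qed
  moreover have "r < NN" using assms(1) by (simp add: less_le_trans[OF _ mult_le_mono2[of 1 "d+1" n], simplified] )
  ultimately show ?thesis unfolding Qq_def using assms(1) by (intro bexI[of _ h] exI[of _ r]) auto
qed

lemma Q_pair:
  assumes "r1 < n" "r2 < n" "r1 \<noteq> r2"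
  shows "Qq r1 \<or> Qq r2"
proof (cases "a r1 = 0 \<or> a r2 = 0")
  case True then show ?thesis using Q_unit assms by blast
next
  case False
  define h where "h = (\<lambda>r. if r = r2 then a r1 else if r = r1 then - a r2 else 0)"
  have pv: "polyvec n h" using assms by (auto simp: polyvec_def h_def)
  have "(\<Sum>r<n. a r * h r) = (\<Sum>r<n. (if r = r2 then a r2 * a r1 else 0) + (if r = r1 then - (a r1 * a r2) else 0))"
    by (intro sum.cong refl) (auto simp: h_def assms(3))
  also have "\<dots> = 0" using assms by (simp add: sum.distrib mult.commute)
  finally have syz: "h \<in> syz n a" using pv by (simp add: syz_def)
  have "\<exists>r<n. h r \<noteq> 0" using False assms by (intro exI[of _ r2]) (auto simp: h_def)
  then obtain I where I: "lead n h I" using lead_exists[OF n0 pv] by auto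
  have c: "coeff (h (I mod n)) (I div n) \<noteq> 0" using I by (simp add: lead_def cf_def)
  then have hI: "h (I mod n) \<noteq> 0" by auto
  have "I div n \<le> degree (h (I mod n))" using c by (rule le_degree)
  also have "\<dots> \<le> d" using a_deg by (auto simp: h_def)
  finally have "I div n < d + 1" by simp
  then have "I < NN" using n0 by (metis div_less_iff_less_mult mult.commute)
  moreover have "I mod n = r1 \<or> I mod n = r2" using hI by (auto simp: h_def split: if_splits)
  ultimately show ?thesis using syz I unfolding Qq_def by blast
qed

lemma r0_props: "\<exists>r0<n. \<forall>r<n. (Pp r \<longleftrightarrow> r \<noteq> r0) \<and> (Qq r \<longleftrightarrow> r \<noteq> r0)"
proof -
  obtain r0 where r0: "r0 < n" "\<not> Pp r0" using not_all_P by auto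
  have "\<forall>r<n. (Pp r \<longleftrightarrow> r \<noteq> r0) \<and> (Qq r \<longleftrightarrow> r \<noteq> r0)"
  proof (intro allI impI)
    fix r assume "r < n"
    show "(Pp r \<longleftrightarrow> r \<noteq> r0) \<and> (Qq r \<longleftrightarrow> r \<noteq> r0)"
    proof (cases "r = r0")
      case True then show ?thesis using r0 Qq_Pp by blast
    next
      case False
      then have "Qq r" using Q_pair[OF \<open>r<n\<close> r0(1) False] r0(2) Qq_Pp by blast
      then show ?thesis using False Qq_Pp by blast
    qed
  qed
  then show ?thesis using r0 by blast
qed

end

context mb begin

abbreviation "qt \<equiv> basic_nonpivots n MM NN AA"
abbreviation "uu \<equiv> g ` qt"

definition r0 :: nat where
  "r0 = (SOME r0. r0 < n \<and> (\<forall>r<n. (Pp r \<longleftrightarrow> r \<noteq> r0) \<and> (Qq r \<longleftrightarrow> r \<noteq> r0)))"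

lemma r0: "r0 < n" "\<And>r. r < n \<Longrightarrow> Pp r \<longleftrightarrow> r \<noteq> r0" "\<And>r. r < n \<Longrightarrow> Qq r \<longleftrightarrow> r \<noteq> r0"
proof -
  have "r0 < n \<and> (\<forall>r<n. (Pp r \<longleftrightarrow> r \<noteq> r0) \<and> (Qq r \<longleftrightarrow> r \<noteq> r0))"
    unfolding r0_def using r0_props by (rule someI_ex)
  then show "r0 < n" "\<And>r. r < n \<Longrightarrow> Pp r \<longleftrightarrow> r \<noteq> r0" "\<And>r. r < n \<Longrightarrow> Qq r \<longleftrightarrow> r \<noteq> r0" by auto
qed

lemma qt_mem: "i \<in> qt \<longleftrightarrow> i < NN \<and> \<not> pivotal MM AA i \<and>
   (\<forall>j. j < NN \<and> \<not> pivotal MM AA j \<and> j mod n = i mod n \<longrightarrow> i \<le> j)"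
  unfolding basic_nonpivots_def nonpivots_def by auto

lemma qt_np: "i \<in> qt \<Longrightarrow> i < NN \<and> \<not> pivotal MM AA i" using qt_mem by blast

lemma qt_min: "i \<in> qt \<Longrightarrow> j < NN \<Longrightarrow> \<not> pivotal MM AA j \<Longrightarrow> j mod n = i mod n \<Longrightarrow> i \<le> j"
  using qt_mem by blast

lemma qt_fin: "finite qt"
proof (rule finite_subset[of _ "{..<NN}"])
  show "qt \<subseteq> {..<NN}" using qt_np by blast
qed simp

lemma qt_inj: "inj_on (\<lambda>i. i mod n) qt"
proof (rule inj_onI)
  fix x y assume "x \<in> qt" "y \<in> qt" "x mod n = y mod n"
  then show "x = y" using qt_min[of x y] qt_min[of y x] qt_np by (metis le_antisym)
qed

lemma qt_image: "(\<lambda>i. i mod n) ` qt = {..<n} - {r0}"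
proof
  show "(\<lambda>i. i mod n) ` qt \<subseteq> {..<n} - {r0}"
  proof
    fix x assume "x \<in> (\<lambda>i. i mod n) ` qt"
    then obtain i where i: "i \<in> qt" "x = i mod n" by auto
    then have "i < NN" "\<not> pivotal MM AA i" using qt_np by blast+
    then obtain h where "h \<in> syz n a" "lead n h i" using NP_iff by blast
    then have "Pp (i mod n)" unfolding Pp_def by blast
    moreover have "i mod n < n" using n0 by simp
    ultimately show "x \<in> {..<n} - {r0}" using r0(2) i(2) by auto
  qed
next
  show "{..<n} - {r0} \<subseteq> (\<lambda>i. i mod n) ` qt"
  proof
    fix r assume r: "r \<in> {..<n} - {r0}"
    then have "Qq r" using r0(3) by auto
    then obtain h I where hI: "h \<in> syz n a" "I < NN" "lead n h I" "I mod n = r" unfolding Qq_def by auto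
    then have np: "\<not> pivotal MM AA I" using NP_iff by blast
    define i where "i = (LEAST i. i < NN \<and> \<not> pivotal MM AA i \<and> i mod n = r)"
    have ex: "I < NN \<and> \<not> pivotal MM AA I \<and> I mod n = r" using hI np by simp
    have i: "i < NN \<and> \<not> pivotal MM AA i \<and> i mod n = r"
      unfolding i_def by (rule LeastI[of _ I]) (rule ex)
    have "i \<in> qt" unfolding qt_mem
    proof (intro conjI allI impI)
      show "i < NN" "\<not> pivotal MM AA i" using i by blast+
      fix j assume "j < NN \<and> \<not> pivotal MM AA j \<and> j mod n = i mod n"
      then show "i \<le> j" using i unfolding i_def by (intro Least_le) simp
    qed
    then show "r \<in> (\<lambda>i. i mod n) ` qt" using i by force
  qed
qed

lemma card_qt: "card qt = n - 1"
proof -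
  have "card qt = card ((\<lambda>i. i mod n) ` qt)" using card_image[OF qt_inj] by simp
  also have "\<dots> = n - 1" using qt_image r0(1) by simp
  finally show ?thesis .
qed


lemma g_inj: "inj_on g qt"
proof (rule inj_onI)
  fix i j assume "i \<in> qt" "j \<in> qt" "g i = g j"
  then show "i = j" using g_lead(1)[of i] g_lead(1)[of j] qt_np lead_unique by metis
qed

lemma uu_syz: "uu \<subseteq> syz n a"
  using g_syz qt_np by blast

lemma reduce_idx:
  assumes "h \<in> syz n a" "lead n h I"
  shows "\<exists>i\<in>qt. i mod n = I mod n \<and> i \<le> I"
proof -
  have "Pp (I mod n)" using assms unfolding Pp_def by blast
  moreover have Imn: "I mod n < n" using n0 by simp
  ultimately have "I mod n \<in> {..<n} - {r0}" using r0(2) by auto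
  then obtain i where i: "i \<in> qt" "i mod n = I mod n" using qt_image by (metis imageE)
  have "i \<le> I"
  proof (cases "I < NN")
    case True
    then have "\<not> pivotal MM AA I" using NP_iff assms by blast
    then show ?thesis using qt_min[OF i(1) True] i(2) by simp
  next
    case False then show ?thesis using qt_np[OF i(1)] by simp
  qed
  then show ?thesis using i by blast
qed

end

lemma cf_sum: "cf n (\<lambda>r. \<Sum>x\<in>S. X x r) j = (\<Sum>x\<in>S. cf n (X x) j)"
  by (simp add: cf_def coeff_sum)

context mb begin

lemma gi_syz: "i \<in> qt \<Longrightarrow> g i \<in> syz n a" using g_syz qt_np by blast

lemma gen:
  "\<forall>h. h \<in> syz n a \<longrightarrow> (\<forall>j\<ge>I. cf n h j = 0) \<longrightarrow> (\<exists>f. h = (\<lambda>r. \<Sum>x\<in>uu. f x * x r))"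
proof (induction I)
  case 0
  show ?case
  proof (intro allI impI)
    fix h assume hs: "h \<in> syz n a" and hz: "\<forall>j\<ge>0. cf n h j = 0"
    have "h = (\<lambda>r. 0)"
    proof
      fix r show "h r = 0"
      proof (cases "r < n")
        case True
        show ?thesis
        proof (rule poly_eqI)
          fix k show "coeff (h r) k = coeff 0 k" using hz cf_kn[OF True, of h k] by simp
        qed
      next
        case False then show ?thesis using hs by (simp add: syz_def polyvec_def)
      qed
    qed
    then show "\<exists>f. h = (\<lambda>r. \<Sum>x\<in>uu. f x * x r)" by (intro exI[of _ "\<lambda>_. 0"]) simp
  qed
next
  case (Suc I)
  show ?case
  proof (intro allI impI)
    fix h assume hs: "h \<in> syz n a" and hz: "\<forall>j\<ge>Suc I. cf n h j = 0"
    show "\<exists>f. h = (\<lambda>r. \<Sum>x\<in>uu. f x * x r)"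
    proof (cases "cf n h I = 0")
      case True
      then have "\<forall>j\<ge>I. cf n h j = 0" using hz by (metis Suc_leI le_neq_implies_less)
      then show ?thesis using Suc.IH hs by blast
    next
      case False
      then have ld: "lead n h I" using hz unfolding lead_def by (simp add: Suc_le_eq)
      obtain i where i: "i \<in> qt" "i mod n = I mod n" "i \<le> I" using reduce_idx[OF hs ld] by blast
      have iN: "i < NN" using qt_np[OF i(1)] by simp
      define c where "c = cf n h I"
      define e where "e = I div n - i div n"
      define m where "m = monom c e"
      define h' where "h' = (\<lambda>r. h r - m * g i r)"
      have gs: "g i \<in> syz n a" using gi_syz[OF i(1)] .
      have "h' \<in> syz n a"
      proof -
        have "polyvec n h'" using hs gs by (simp add: syz_def polyvec_def h'_def)
        moreover have "(\<Sum>r<n. a r * h' r) = (\<Sum>r<n. a r * h r) - m * (\<Sum>r<n. a r * g i r)"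
          by (simp add: h'_def right_diff_distrib sum_subtractf sum_distrib_left mult.left_commute)
        ultimately show ?thesis using hs gs by (simp add: syz_def)
      qed
      moreover have "\<forall>j\<ge>I. cf n h' j = 0"
      proof (intro allI impI)
        fix j assume jI: "I \<le> j"
        define k r where "k = j div n" and "r = j mod n"
        have rn: "r < n" using n0 by (simp add: r_def)
        have jkr: "j = k*n + r" by (simp add: k_def r_def)
        have ie: "i div n + e = I div n" using div_le_mono[OF i(3), of n] by (simp add: e_def)
        have iI: "I = (i div n + e) * n + i mod n" using ie i(2) by simp
        have idec: "i = (i div n) * n + i mod n" by simp
        have cfh': "cf n h' j = cf n h j - (if e \<le> k then c * coeff (g i r) (k - e) else 0)"
          by (simp add: cf_def h'_def m_def coeff_monom_mult k_def r_def not_less)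
        show "cf n h' j = 0"
        proof (cases "j = I")
          case True
          then have "k = I div n" "r = i mod n" using i(2) by (simp_all add: k_def r_def)
          then have "e \<le> k" "k - e = i div n" using ie by simp_all
          moreover have "coeff (g i (i mod n)) (i div n) = 1"
            using g_lead(2)[OF iN] by (simp add: cf_def)
          ultimately show ?thesis using cfh' True \<open>r = i mod n\<close> by (simp add: c_def)
        next
          case False
          then have jgt: "j > I" using jI by simp
          then have "cf n h j = 0" using ld by (simp add: lead_def)
          moreover have "e \<le> k \<Longrightarrow> coeff (g i r) (k - e) = 0"
          proof -
            assume ek: "e \<le> k"
            have s1: "(k-e)*n + e*n = k*n" using ek by (metis add_mult_distrib le_add_diff_inverse2)
            have s2: "(i div n + e) * n = (i div n)*n + e*n" by (simp add: add_mult_distrib)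
            have "(k-e)*n + r > i" using jgt jkr iI idec s1 s2 by linarith
            then have "cf n (g i) ((k-e)*n + r) = 0" using g_lead(1)[OF iN] by (simp add: lead_def)
            then show ?thesis by (metis cf_kn[OF rn])
          qed
          ultimately show ?thesis using cfh' by simp
        qed
      qed
      ultimately obtain f' where f': "h' = (\<lambda>r. \<Sum>x\<in>uu. f' x * x r)" using Suc.IH by blast
      define f where "f = (\<lambda>x. f' x + (if x = g i then m else 0))"
      have fin: "finite uu" using qt_fin by simp
      have giu: "g i \<in> uu" using i(1) by simp
      have "h = (\<lambda>r. \<Sum>x\<in>uu. f x * x r)"
      proof
        fix r
        have "(\<Sum>x\<in>uu. f x * x r) = (\<Sum>x\<in>uu. f' x * x r + (if x = g i then m * x r else 0))"
          by (intro sum.cong refl) (simp add: f_def distrib_right)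
        also have "\<dots> = (\<Sum>x\<in>uu. f' x * x r) + (\<Sum>x\<in>uu. (if x = g i then m * x r else 0))"
          by (rule sum.distrib)
        also have "(\<Sum>x\<in>uu. (if x = g i then m * x r else 0)) = m * g i r"
          using fin giu by (simp add: sum.delta')
        also have "(\<Sum>x\<in>uu. f' x * x r) = h' r" using f' by simp
        also have "h' r + m * g i r = h r" by (simp add: h'_def)
        finally show "h r = (\<Sum>x\<in>uu. f x * x r)" by simp
      qed
      then show ?thesis by blast
    qed
  qed
qed

lemma generates: "h \<in> syz n a \<Longrightarrow> \<exists>f. h = (\<lambda>r. \<Sum>x\<in>uu. f x * x r)"
proof -
  assume hs: "h \<in> syz n a"
  show ?thesis
  proof (cases "\<exists>r<n. h r \<noteq> 0")
    case True
    then obtain I where "lead n h I" using lead_exists[OF n0] hs by (auto simp: syz_def)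
    then have "\<forall>j\<ge>Suc I. cf n h j = 0" by (simp add: lead_def Suc_le_eq)
    then show ?thesis using gen hs by blast
  next
    case False
    then have "\<forall>j\<ge>0. cf n h j = 0" using n0 by (simp add: cf_def)
    then show ?thesis using gen hs by blast
  qed
qed

end

context mb begin

lemma reidx: "(\<Sum>x\<in>uu. F x) = (\<Sum>i\<in>qt. F (g i))"
  using sum.reindex[OF g_inj, of F] by (simp only: comp_def)

lemma free:
  assumes z: "(\<lambda>r. \<Sum>x\<in>uu. f x * x r) = (\<lambda>r. 0)"
  shows "\<forall>x\<in>uu. f x = 0"
proof (rule ccontr)
  assume "\<not> ?thesis"
  then obtain i1 where i1: "i1 \<in> qt" "f (g i1) \<noteq> 0" by auto
  define F where "F i = f (g i)" for i
  have sumeq: "(\<lambda>r. \<Sum>i\<in>qt. F i * g i r) = (\<lambda>r. 0)"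
    using z unfolding reidx F_def by blast
  define Z where "Z = {i\<in>qt. F i \<noteq> 0}"
  define J where "J i = degree (F i) * n + i" for i
  have finZ: "finite Z" using qt_fin by (simp add: Z_def)
  have neZ: "J ` Z \<noteq> {}" using i1 by (auto simp: Z_def F_def)
  obtain i0 where i0: "i0 \<in> Z" "J i0 = Max (J ` Z)" using Max_in[OF finite_imageI[OF finZ] neZ] by auto
  have i0max: "\<And>i. i \<in> Z \<Longrightarrow> J i \<le> J i0" using i0(2) finZ by simp
  have ldi: "lead n (\<lambda>r. F i * g i r) (J i)" "cf n (\<lambda>r. F i * g i r) (J i) = lead_coeff (F i)"
    if "i \<in> Z" for i
  proof -
    have iN: "i < NN" using that qt_np by (auto simp: Z_def)
    have F0: "F i \<noteq> 0" using that by (simp add: Z_def)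
    show "lead n (\<lambda>r. F i * g i r) (J i)" unfolding J_def by (rule cf_mult_lead(1)[OF n0 F0 g_lead(1)[OF iN]])
    show "cf n (\<lambda>r. F i * g i r) (J i) = lead_coeff (F i)"
      unfolding J_def using cf_mult_lead(2)[OF n0 F0 g_lead(1)[OF iN]] g_lead(2)[OF iN] by simp
  qed
  have "0 = cf n (\<lambda>r. \<Sum>i\<in>qt. F i * g i r) (J i0)" using sumeq by (simp add: cf_def)
  also have "\<dots> = (\<Sum>i\<in>qt. cf n (\<lambda>r. F i * g i r) (J i0))" by (rule cf_sum)
  also have "\<dots> = cf n (\<lambda>r. F i0 * g i0 r) (J i0)"
  proof (rule sum_single)
    show "finite qt" by (rule qt_fin)
    show "i0 \<in> qt" using i0 by (simp add: Z_def)
    fix i assume i: "i \<in> qt" "i \<noteq> i0"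
    show "cf n (\<lambda>r. F i * g i r) (J i0) = 0"
    proof (cases "F i = 0")
      case True then show ?thesis by (simp add: cf_def)
    next
      case False
      then have iZ: "i \<in> Z" using i by (simp add: Z_def)
      have "J i \<noteq> J i0"
      proof
        assume "J i = J i0"
        then have "J i mod n = J i0 mod n" by simp
        then have "i mod n = i0 mod n" by (simp add: J_def)
        then show False using qt_inj i i0(1) unfolding Z_def by (auto dest: inj_onD)
      qed
      then have "J i < J i0" using i0max[OF iZ] by simp
      then show ?thesis using ldi(1)[OF iZ] by (simp add: lead_def)
    qed
  qed
  also have "\<dots> = lead_coeff (F i0)" using ldi(2)[OF i0(1)] .
  finally show False using i0(1) by (simp add: Z_def)
qed

lemma lvind:
  assumes z: "\<forall>r. (\<Sum>x\<in>uu. c x * LV n x r) = 0"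
  shows "\<forall>x\<in>uu. c x = 0"
proof (rule ccontr)
  assume "\<not> ?thesis"
  then obtain i1 where i1: "i1 \<in> qt" "c (g i1) \<noteq> 0" by auto
  define C where "C i = c (g i)" for i
  have sumeq: "\<And>r. (\<Sum>i\<in>qt. C i * LV n (g i) r) = 0"
    using z unfolding reidx C_def by blast
  define Z where "Z = {i\<in>qt. C i \<noteq> 0}"
  have finZ: "finite Z" using qt_fin by (simp add: Z_def)
  have neZ: "(\<lambda>i. i mod n) ` Z \<noteq> {}" using i1 by (auto simp: Z_def C_def)
  obtain i0 where i0: "i0 \<in> Z" "i0 mod n = Max ((\<lambda>i. i mod n) ` Z)"
    using Max_in[OF finite_imageI[OF finZ] neZ] by auto
  have i0max: "\<And>i. i \<in> Z \<Longrightarrow> i mod n \<le> i0 mod n" using i0(2) finZ by simp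
  have i0q: "i0 \<in> qt" using i0 by (simp add: Z_def)
  let ?r = "i0 mod n"
  have rn: "?r < n" using n0 by simp
  have LVe: "LV n (g i) ?r = cf n (g i) ((i div n)*n + ?r)" if "i \<in> qt" for i
    using lead_LV[OF n0 g_lead(1) rn] qt_np[OF that] by simp
  have "0 = (\<Sum>i\<in>qt. C i * LV n (g i) ?r)" using sumeq by simp
  also have "\<dots> = C i0 * LV n (g i0) ?r"
  proof (rule sum_single)
    show "finite qt" by (rule qt_fin)
    show "i0 \<in> qt" by (rule i0q)
    fix i assume i: "i \<in> qt" "i \<noteq> i0"
    show "C i * LV n (g i) ?r = 0"
    proof (cases "C i = 0")
      case True then show ?thesis by simp
    next
      case False
      then have iZ: "i \<in> Z" using i by (simp add: Z_def)
      have "i mod n \<noteq> ?r" using qt_inj i i0q by (auto dest: inj_onD)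
      then have "i mod n < ?r" using i0max[OF iZ] by simp
      then have "(i div n)*n + ?r > i" by (metis add_less_cancel_left div_mult_mod_eq)
      then have "cf n (g i) ((i div n)*n + ?r) = 0" using g_lead(1) qt_np[OF i(1)] by (simp add: lead_def)
      then show ?thesis using LVe[OF i(1)] by simp
    qed
  qed
  also have "LV n (g i0) ?r = 1"
    using LVe[OF i0q] g_lead(2) qt_np[OF i0q] by simp
  finally show False using i0(1) by (simp add: Z_def)
qed

lemma main: "is_mu_basis n a uu"
  unfolding is_mu_basis_def
proof (intro conjI allI impI ballI)
  show "finite uu" using qt_fin by simp
  show "card uu = n - 1" using card_image[OF g_inj] card_qt by simp
  show "uu \<subseteq> syz n a" by (rule uu_syz)
  fix h assume "h \<in> syz n a" then show "\<exists>f. h = (\<lambda>r. \<Sum>x\<in>uu. f x * x r)" by (rule generates)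
next
  fix c :: "(nat \<Rightarrow> 'a poly) \<Rightarrow> 'a" and x
  assume "\<forall>r. (\<Sum>g\<in>uu. c g * LV n g r) = 0" "x \<in> uu"
  then show "c x = 0" using lvind by blast
next
  fix f :: "(nat \<Rightarrow> 'a poly) \<Rightarrow> 'a poly" and x
  assume "(\<lambda>r. \<Sum>g\<in>uu. f g * g r) = (\<lambda>r. 0)" "x \<in> uu"
  then show "f x = 0" using free by blast
qed

end

theorem theorem1:
  fixes a :: "nat \<Rightarrow> 'a::field poly" and n d :: nat
  assumes "n > 1"
    and "polyvec n a"
    and "\<exists>r<n. a r \<noteq> 0"
    and "d = pvdeg n a"
  shows "is_mu_basis n a
           ((\<lambda>i. flat n d (bvec (2*d+1) (n*(d+1)) (coeff_mat n a) i))
              ` basic_nonpivots n (2*d+1) (n*(d+1)) (coeff_mat n a))"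
proof -
  interpret mb a n d using assms by unfold_locales
  show ?thesis by (rule main)
qed

end
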